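(* Let ${\cal H}\subset{\cal H}_0$, ${\mathcal D}$, $b$, $\mu_\ell^{-1}$, $\epsilon_\ell$, $a_\ell$ ($\ell=1,2$) be as in the context (the standing assumptions there hold), and let ${\cal H}_N\subset{\cal H}$ be a finite-dimensional subspace. Suppose that, with $0<C_{{\rm dis},N,1}<\infty$, $$\inf_{u_N\in{\cal H}_N\setminus\{0\}}\sup_{v_N\in{\cal H}_N\setminus\{0\}}\frac{|a_1(u_N,v_N)|}{\|u_N\|_{{\cal H}}\|v_N\|_{{\cal H}}}\ge\frac{1}{C_{{\rm dis},N,1}},$$ for all $v_N\in{\cal H}_N\setminus\{0\}$, $\sup_{u_N\in{\cal H}_N\setminus\{0\}}|a_1(u_N,v_N)|>0$, and $$\Big(\|\mu_1^{-1}-\mu_2^{-1}\|_{{\cal H}_0\to{\cal H}_0}+\|\epsilon_1-\epsilon_2\|_{{\cal H}_0\to{\cal H}_0}\Big)C_{{\rm dis},N,1}\le\tfrac12.$$ Then $$\inf_{u_N\in{\cal H}_N\setminus\{0\}}\sup_{v_N\in{\cal H}_N\setminus\{0\}}\frac{|a_2(u_N,v_N)|}{\|u_N\|_{{\cal H}}\|v_N\|_{{\cal H}}}\ge\frac{1}{2C_{{\rm dis},N,1}}$$ and, for all $v_N\in{\cal H}_N\setminus\{0\}$, $\sup_{u_N\in{\cal H}_N\setminus\{0\}}|a_2(u_N,v_N)|>0$.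
   Context: Standing assumptions: ${\cal H}\subset{\cal H}_0$ are complex Hilbert spaces with $\|v\|_{{\cal H}_0}\le\|v\|_{{\cal H}}$ for $v\in{\cal H}$, and ${\cal H}_0$ is identified with its dual so that ${\cal H}\subset{\cal H}_0\subset{\cal H}^*$. ${\mathcal D}:{\cal H}\to{\cal H}_0$ is linear with $\|{\mathcal D}\|_{{\cal H}\to{\cal H}_0}\le 1$; $b(\cdot,\cdot)$ is a continuous sesquilinear form on ${\cal H}$; for $\ell=1,2$, $\mu_\ell^{-1}:{\cal H}_0\to{\cal H}_0$ and $\epsilon_\ell:{\cal H}_0\to{\cal H}_0$ are bounded linear operators, and $a_\ell(u,v):=(\mu_\ell^{-1}{\mathcal D}u,{\mathcal D}v)_{{\cal H}_0}+b(u,v)-(\epsilon_\ell u,v)_{{\cal H}_0}$. For $\ell=1,2$ there exist $C_{{\rm G1},\ell},C_{{\rm G2},\ell}>0$ with $|a_\ell(v,v)+C_{{\rm G2},\ell}\|v\|_{{\cal H}_0}^2|\ge C_{{\rm G1},\ell}\|v\|_{{\cal H}}^2$ for all $v\in{\cal H}$. *)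

theory Defs
  imports "HOL-Analysis.Analysis"
begin

text \<open>A complex vector space is modelled as a type 'v with a scalar multiplication
  sc :: complex => 'v => 'v satisfying the vector_space axioms.\<close>

definition cinner_on :: "(complex \<Rightarrow> 'v::ab_group_add \<Rightarrow> 'v) \<Rightarrow> 'v set \<Rightarrow> ('v \<Rightarrow> 'v \<Rightarrow> complex) \<Rightarrow> bool" where
  "cinner_on sc V ip \<longleftrightarrow> module.subspace sc V \<and>
     (\<forall>x\<in>V. \<forall>y\<in>V. \<forall>z\<in>V. ip (x + y) z = ip x z + ip y z) \<and>
     (\<forall>c. \<forall>x\<in>V. \<forall>y\<in>V. ip (sc c x) y = c * ip x y) \<and>
     (\<forall>x\<in>V. \<forall>y\<in>V. ip y x = cnj (ip x y)) \<and>
     (\<forall>x\<in>V. Im (ip x x) = 0 \<and> 0 \<le> Re (ip x x)) \<and>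
     (\<forall>x\<in>V. ip x x = 0 \<longrightarrow> x = 0)"

definition cnorm :: "('v \<Rightarrow> 'v \<Rightarrow> complex) \<Rightarrow> 'v \<Rightarrow> real" where
  "cnorm ip x = sqrt (Re (ip x x))"

definition chilbert_on :: "(complex \<Rightarrow> 'v::ab_group_add \<Rightarrow> 'v) \<Rightarrow> 'v set \<Rightarrow> ('v \<Rightarrow> 'v \<Rightarrow> complex) \<Rightarrow> bool" where
  "chilbert_on sc V ip \<longleftrightarrow> cinner_on sc V ip \<and>
     (\<forall>X. (\<forall>n. X n \<in> V) \<and> (\<forall>e>0. \<exists>N. \<forall>m\<ge>N. \<forall>n\<ge>N. cnorm ip (X m - X n) < e)
          \<longrightarrow> (\<exists>l\<in>V. (\<lambda>n. cnorm ip (X n - l)) \<longlonglongrightarrow> 0))"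

definition clinear_on :: "(complex \<Rightarrow> 'v::ab_group_add \<Rightarrow> 'v) \<Rightarrow> 'v set \<Rightarrow> ('v \<Rightarrow> 'v) \<Rightarrow> bool" where
  "clinear_on sc V f \<longleftrightarrow> (\<forall>x\<in>V. \<forall>y\<in>V. f (x + y) = f x + f y) \<and>
     (\<forall>c. \<forall>x\<in>V. f (sc c x) = sc c (f x))"

definition sesq_on :: "(complex \<Rightarrow> 'v::ab_group_add \<Rightarrow> 'v) \<Rightarrow> 'v set \<Rightarrow> ('v \<Rightarrow> 'v \<Rightarrow> complex) \<Rightarrow> bool" where
  "sesq_on sc V b \<longleftrightarrow>
     (\<forall>x\<in>V. \<forall>y\<in>V. \<forall>z\<in>V. b (x + y) z = b x z + b y z) \<and>
     (\<forall>c. \<forall>x\<in>V. \<forall>y\<in>V. b (sc c x) y = c * b x y) \<and>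
     (\<forall>x\<in>V. \<forall>y\<in>V. \<forall>z\<in>V. b x (y + z) = b x y + b x z) \<and>
     (\<forall>c. \<forall>x\<in>V. \<forall>y\<in>V. b x (sc c y) = cnj c * b x y)"

text \<open>Operator norm of T : H0 -> H0, where H0 is the whole type with norm n0.\<close>
definition opnorm :: "('v \<Rightarrow> real) \<Rightarrow> ('v \<Rightarrow> 'v) \<Rightarrow> real" where
  "opnorm n0 T = Inf {K. 0 \<le> K \<and> (\<forall>x. n0 (T x) \<le> K * n0 x)}"

definition aform :: "('v \<Rightarrow> 'v \<Rightarrow> complex) \<Rightarrow> ('v \<Rightarrow> 'v) \<Rightarrow> ('v \<Rightarrow> 'v \<Rightarrow> complex)
     \<Rightarrow> ('v \<Rightarrow> 'v) \<Rightarrow> ('v \<Rightarrow> 'v) \<Rightarrow> 'v \<Rightarrow> 'v \<Rightarrow> complex" where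
  "aform ip0 D b muinv eps u v = ip0 (muinv (D u)) (D v) + b u v - ip0 (eps u) v"

end

theory Submission
  imports Defs
begin


lemma cs_alg:
  assumes "r > 0"
  shows "A - cnj (p / complex_of_real r) * p - (p / complex_of_real r) * cnj p
     + (p / complex_of_real r) * cnj (p / complex_of_real r) * complex_of_real r
     = A - complex_of_real ((cmod p)\<^sup>2 / r)"
proof -
  have n0: "complex_of_real ((cmod p)\<^sup>2) = p * cnj p" by (rule complex_norm_square)
  have n: "(complex_of_real (cmod p))\<^sup>2 = p * cnj p" using n0 by simp
  have "cnj (p / complex_of_real r) = cnj p / complex_of_real r" by simp
  then show ?thesis using assms
    by (simp add: n field_simps of_real_divide)
qed

context
  fixes sc :: "complex \<Rightarrow> 'v::ab_group_add \<Rightarrow> 'v" and ip :: "'v \<Rightarrow> 'v \<Rightarrow> complex"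
  assumes ci: "cinner_on sc UNIV ip"
begin

lemma ci': "(\<forall>x\<in>UNIV. \<forall>y\<in>UNIV. \<forall>z\<in>UNIV. ip (x + y) z = ip x z + ip y z) \<and>
     (\<forall>c. \<forall>x\<in>UNIV. \<forall>y\<in>UNIV. ip (sc c x) y = c * ip x y) \<and>
     (\<forall>x\<in>UNIV. \<forall>y\<in>UNIV. ip y x = cnj (ip x y)) \<and>
     (\<forall>x\<in>UNIV. Im (ip x x) = 0 \<and> 0 \<le> Re (ip x x)) \<and>
     (\<forall>x\<in>UNIV. ip x x = 0 \<longrightarrow> x = 0)"
  using ci unfolding cinner_on_def by (rule conjunct2)

lemma ip_add1: "ip (x + y) z = ip x z + ip y z"
  by (rule ci'[THEN conjunct1, rule_format]) (rule UNIV_I)+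
lemma ip_scale1: "ip (sc c x) y = c * ip x y"
  by (rule ci'[THEN conjunct2, THEN conjunct1, rule_format]) (rule UNIV_I)+
lemma ip_sym: "ip y x = cnj (ip x y)"
  by (rule ci'[THEN conjunct2, THEN conjunct2, THEN conjunct1, rule_format]) (rule UNIV_I)+
lemma ip_diff1: "ip (x - y) z = ip x z - ip y z"
  using ip_add1[of "x - y" y z] by simp
lemma ip_add2: "ip z (x + y) = ip z x + ip z y"
proof -
  have "ip z (x + y) = cnj (ip (x + y) z)" by (rule ip_sym)
  also have "\<dots> = cnj (ip x z) + cnj (ip y z)" by (simp add: ip_add1)
  finally show ?thesis by (simp add: ip_sym[of x z] ip_sym[of y z])
qed
lemma ip_diff2: "ip z (x - y) = ip z x - ip z y"
proof -
  have "ip z (x - y) = cnj (ip (x - y) z)" by (rule ip_sym)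
  also have "\<dots> = cnj (ip x z) - cnj (ip y z)" by (simp add: ip_diff1)
  finally show ?thesis by (simp add: ip_sym[of x z] ip_sym[of y z])
qed
lemma ip_scale2: "ip x (sc c y) = cnj c * ip x y"
proof -
  have "ip x (sc c y) = cnj (ip (sc c y) x)" by (rule ip_sym)
  also have "\<dots> = cnj c * cnj (ip y x)" by (simp add: ip_scale1)
  finally show ?thesis by (simp add: ip_sym[of y x])
qed
lemma ip_re: "Im (ip x x) = 0 \<and> 0 \<le> Re (ip x x)"
  by (rule ci'[THEN conjunct2, THEN conjunct2, THEN conjunct2, THEN conjunct1, rule_format]) (rule UNIV_I)+
lemma ip_self: "ip x x = complex_of_real ((cnorm ip x)\<^sup>2)"
proof -
  have h: "Im (ip x x) = 0 \<and> 0 \<le> Re (ip x x)" by (rule ip_re)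
  then have "Im (ip x x) = 0" "0 \<le> Re (ip x x)" by auto
  then show ?thesis unfolding cnorm_def by (simp add: complex_eq_iff)
qed
lemma cnorm_nonneg: "0 \<le> cnorm ip x"
proof -
  have "0 \<le> Re (ip x x)" using ip_re by blast
  then show ?thesis unfolding cnorm_def by simp
qed
lemma ip_def0: "cnorm ip x = 0 \<Longrightarrow> x = 0"
proof -
  assume "cnorm ip x = 0"
  then have "ip x x = 0" using ip_self[of x] by simp
  then show "x = 0" by (rule ci'[THEN conjunct2, THEN conjunct2, THEN conjunct2, THEN conjunct2, rule_format, OF UNIV_I])
qed
lemma ip_zero2: "ip x 0 = 0"
  using ip_add2[of x 0 0] by simp

lemma cauchy_schwarz: "cmod (ip x y) \<le> cnorm ip x * cnorm ip y"
proof (cases "cnorm ip y = 0")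
  case True
  then have "y = 0" using ip_def0 by blast
  then show ?thesis using ip_zero2 cnorm_nonneg by simp
next
  case False
  define a where "a = cnorm ip x"
  define bb where "bb = cnorm ip y"
  define p where "p = ip x y"
  have bpos: "bb > 0" using False cnorm_nonneg[of y] bb_def by simp
  define t where "t = p / complex_of_real (bb\<^sup>2)"
  have "ip (x - sc t y) (x - sc t y) = ip x x - cnj t * ip x y - t * ip y x + t * cnj t * ip y y"
    by (simp add: ip_diff1 ip_diff2 ip_scale1 ip_scale2 algebra_simps)
  also have "\<dots> = ip x x - cnj t * p - t * cnj p + t * cnj t * complex_of_real (bb\<^sup>2)"
    by (simp add: p_def ip_sym[of y x] ip_self[of y] bb_def)
  also have "\<dots> = ip x x - complex_of_real ((cmod p)\<^sup>2 / bb\<^sup>2)"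
    unfolding t_def by (rule cs_alg) (use bpos in simp)
  also have "\<dots> = complex_of_real (a\<^sup>2 - (cmod p)\<^sup>2 / bb\<^sup>2)"
    by (simp add: ip_self[of x] a_def)
  finally have e: "ip (x - sc t y) (x - sc t y) = complex_of_real (a\<^sup>2 - (cmod p)\<^sup>2 / bb\<^sup>2)" .
  have "complex_of_real ((cnorm ip (x - sc t y))\<^sup>2) = complex_of_real (a\<^sup>2 - (cmod p)\<^sup>2 / bb\<^sup>2)"
    using e ip_self[of "x - sc t y"] by simp
  then have "(cnorm ip (x - sc t y))\<^sup>2 = a\<^sup>2 - (cmod p)\<^sup>2 / bb\<^sup>2"
    by (simp only: of_real_eq_iff)
  then have "0 \<le> a\<^sup>2 - (cmod p)\<^sup>2 / bb\<^sup>2"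
    by (metis zero_le_power2)
  then have "(cmod p)\<^sup>2 / bb\<^sup>2 \<le> a\<^sup>2" by linarith
  then have "(cmod p)\<^sup>2 \<le> a\<^sup>2 * bb\<^sup>2" using bpos by (simp add: divide_le_eq)
  then have "(cmod p)\<^sup>2 \<le> (a * bb)\<^sup>2" by (simp only: power_mult_distrib)
  then have "cmod p \<le> a * bb"
    by (rule power2_le_imp_le) (simp add: a_def bb_def cnorm_nonneg)
  then show ?thesis unfolding a_def bb_def p_def .
qed

lemma cnorm_diff_le: "cnorm ip (x - y) \<le> cnorm ip x + cnorm ip y"
proof -
  have "complex_of_real ((cnorm ip (x - y))\<^sup>2) = ip (x - y) (x - y)"
    by (simp add: ip_self)
  also have "\<dots> = ip x x - ip x y - ip y x + ip y y"
    by (simp add: ip_diff1 ip_diff2)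
  also have "\<dots> = complex_of_real ((cnorm ip x)\<^sup>2 + (cnorm ip y)\<^sup>2 - 2 * Re (ip x y))"
    by (simp add: ip_self[of x] ip_self[of y] ip_sym[of y x] complex_eq_iff)
  finally have e: "(cnorm ip (x - y))\<^sup>2 = (cnorm ip x)\<^sup>2 + (cnorm ip y)\<^sup>2 - 2 * Re (ip x y)"
    using of_real_eq_iff by blast
  have "- Re (ip x y) \<le> cmod (ip x y)" using abs_Re_le_cmod[of "ip x y"] by linarith
  then have "(cnorm ip (x - y))\<^sup>2 \<le> (cnorm ip x + cnorm ip y)\<^sup>2"
    using e cauchy_schwarz[of x y] by (simp add: power2_sum)
  then show ?thesis using cnorm_nonneg by (meson add_nonneg_nonneg power2_le_imp_le)
qed

end

lemma opnorm_bound: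
  assumes nn: "\<And>x. 0 \<le> n0 x" and K: "\<exists>K. \<forall>x. n0 (T x) \<le> K * n0 x"
  shows "n0 (T x) \<le> opnorm n0 T * n0 x" "0 \<le> opnorm n0 T"
proof -
  let ?S = "{K. 0 \<le> K \<and> (\<forall>x. n0 (T x) \<le> K * n0 x)}"
  obtain K where K: "\<forall>x. n0 (T x) \<le> K * n0 x" using K by blast
  have "max K 0 \<in> ?S"
  proof -
    have "n0 (T x) \<le> max K 0 * n0 x" for x
      using K[rule_format, of x] nn[of x] by (meson max.cobounded1 mult_right_mono order_trans)
    then show ?thesis by simp
  qed
  then have ne: "?S \<noteq> {}" by blast
  have bdd: "bdd_below ?S" by (rule bdd_belowI[of _ 0]) auto
  show "0 \<le> opnorm n0 T" unfolding opnorm_def by (rule cInf_greatest[OF ne]) auto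
  show "n0 (T x) \<le> opnorm n0 T * n0 x"
  proof (cases "n0 x = 0")
    case True
    have "n0 (T x) \<le> max K 0 * n0 x" using \<open>max K 0 \<in> ?S\<close> by blast
    then show ?thesis using True by simp
  next
    case False
    then have pos: "n0 x > 0" using nn[of x] by simp
    have "n0 (T x) / n0 x \<le> opnorm n0 T" unfolding opnorm_def
      by (rule cInf_greatest[OF ne]) (use pos in \<open>auto simp: field_simps\<close>)
    then show ?thesis using pos by (simp add: field_simps)
  qed
qed




theorem lemma5p4:
  fixes sc :: "complex \<Rightarrow> 'v::ab_group_add \<Rightarrow> 'v"
    and ip0 ipH :: "'v \<Rightarrow> 'v \<Rightarrow> complex"
    and H HN :: "'v set"
    and D :: "'v \<Rightarrow> 'v"
    and b :: "'v \<Rightarrow> 'v \<Rightarrow> complex"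
    and muinv1 muinv2 eps1 eps2 :: "'v \<Rightarrow> 'v"
    and Cdis :: real
  assumes vs: "vector_space sc"
    and H0_hilbert: "chilbert_on sc UNIV ip0"
    and H_hilbert: "chilbert_on sc H ipH"
    and norm_le: "\<forall>v\<in>H. cnorm ip0 v \<le> cnorm ipH v"
    and D_lin: "clinear_on sc H D"
    and D_bd: "\<forall>u\<in>H. cnorm ip0 (D u) \<le> cnorm ipH u"
    and b_sesq: "sesq_on sc H b"
    and b_cont: "\<exists>K. \<forall>u\<in>H. \<forall>v\<in>H. cmod (b u v) \<le> K * cnorm ipH u * cnorm ipH v"
    and mu1_lin: "Vector_Spaces.linear sc sc muinv1"
    and mu2_lin: "Vector_Spaces.linear sc sc muinv2"
    and eps1_lin: "Vector_Spaces.linear sc sc eps1"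
    and eps2_lin: "Vector_Spaces.linear sc sc eps2"
    and mu1_bd: "\<exists>K. \<forall>x. cnorm ip0 (muinv1 x) \<le> K * cnorm ip0 x"
    and mu2_bd: "\<exists>K. \<forall>x. cnorm ip0 (muinv2 x) \<le> K * cnorm ip0 x"
    and eps1_bd: "\<exists>K. \<forall>x. cnorm ip0 (eps1 x) \<le> K * cnorm ip0 x"
    and eps2_bd: "\<exists>K. \<forall>x. cnorm ip0 (eps2 x) \<le> K * cnorm ip0 x"
    and garding1: "\<exists>CG1>0. \<exists>CG2>0. \<forall>v\<in>H.
        cmod (aform ip0 D b muinv1 eps1 v v + complex_of_real (CG2 * (cnorm ip0 v)\<^sup>2))
          \<ge> CG1 * (cnorm ipH v)\<^sup>2"
    and garding2: "\<exists>CG1>0. \<exists>CG2>0. \<forall>v\<in>H.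
        cmod (aform ip0 D b muinv2 eps2 v v + complex_of_real (CG2 * (cnorm ip0 v)\<^sup>2))
          \<ge> CG1 * (cnorm ipH v)\<^sup>2"
    and HN_sub: "module.subspace sc HN" and HN_H: "HN \<subseteq> H"
    and HN_fin: "\<exists>B. finite B \<and> module.span sc B = HN"
    and Cdis_pos: "0 < Cdis"
    and infsup1: "(INF u\<in>HN - {0}. SUP v\<in>HN - {0}.
        ereal (cmod (aform ip0 D b muinv1 eps1 u v) / (cnorm ipH u * cnorm ipH v)))
        \<ge> ereal (1 / Cdis)"
    and nondeg1: "\<forall>v\<in>HN - {0}. (SUP u\<in>HN - {0}. ereal (cmod (aform ip0 D b muinv1 eps1 u v))) > 0"
    and small: "(opnorm (cnorm ip0) (\<lambda>x. muinv1 x - muinv2 x)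
        + opnorm (cnorm ip0) (\<lambda>x. eps1 x - eps2 x)) * Cdis \<le> 1 / 2"
  shows "((INF u\<in>HN - {0}. SUP v\<in>HN - {0}.
        ereal (cmod (aform ip0 D b muinv2 eps2 u v) / (cnorm ipH u * cnorm ipH v)))
        \<ge> ereal (1 / (2 * Cdis))) \<and>
    (\<forall>v\<in>HN - {0}. (SUP u\<in>HN - {0}. ereal (cmod (aform ip0 D b muinv2 eps2 u v))) > 0)"
proof -
  interpret V: vector_space sc by (rule vs)
  have ci0: "cinner_on sc UNIV ip0" using H0_hilbert unfolding chilbert_on_def by (rule conjunct1)
  have ciH: "cinner_on sc H ipH" using H_hilbert unfolding chilbert_on_def by (rule conjunct1)
  have ciH': "module.subspace sc H \<and>
     (\<forall>x\<in>H. \<forall>y\<in>H. \<forall>z\<in>H. ipH (x + y) z = ipH x z + ipH y z) \<and>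
     (\<forall>c. \<forall>x\<in>H. \<forall>y\<in>H. ipH (sc c x) y = c * ipH x y) \<and>
     (\<forall>x\<in>H. \<forall>y\<in>H. ipH y x = cnj (ipH x y)) \<and>
     (\<forall>x\<in>H. Im (ipH x x) = 0 \<and> 0 \<le> Re (ipH x x)) \<and>
     (\<forall>x\<in>H. ipH x x = 0 \<longrightarrow> x = 0)" using ciH unfolding cinner_on_def .
  have Hsub: "V.subspace H" using ciH' by (rule conjunct1)
  have Hre: "\<And>x. x \<in> H \<Longrightarrow> Im (ipH x x) = 0 \<and> 0 \<le> Re (ipH x x)"
    by (rule ciH'[THEN conjunct2, THEN conjunct2, THEN conjunct2, THEN conjunct2, THEN conjunct1, rule_format])
  have Hdef: "\<And>x. x \<in> H \<Longrightarrow> ipH x x = 0 \<Longrightarrow> x = 0"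
    by (rule ciH'[THEN conjunct2, THEN conjunct2, THEN conjunct2, THEN conjunct2, THEN conjunct2, rule_format])
  have nH_nonneg: "\<And>x. x \<in> H \<Longrightarrow> 0 \<le> cnorm ipH x" unfolding cnorm_def using Hre by simp
  have nH_pos: "\<And>x. x \<in> H \<Longrightarrow> x \<noteq> 0 \<Longrightarrow> 0 < cnorm ipH x"
  proof -
    fix x assume x: "x \<in> H" "x \<noteq> 0"
    show "0 < cnorm ipH x"
    proof (rule ccontr)
      assume "\<not> 0 < cnorm ipH x"
      then have "cnorm ipH x = 0" using nH_nonneg[OF x(1)] by linarith
      then have "Re (ipH x x) = 0" using Hre[OF x(1)] unfolding cnorm_def by simp
      then have "ipH x x = 0" using Hre[OF x(1)] by (simp add: complex_eq_iff)
      then show False using Hdef[OF x(1)] x(2) by blast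
    qed
  qed
  have n0_nonneg: "\<And>x. 0 \<le> cnorm ip0 x" by (rule cnorm_nonneg[OF ci0])
  define dm where "dm = opnorm (cnorm ip0) (\<lambda>x. muinv1 x - muinv2 x)"
  define de where "de = opnorm (cnorm ip0) (\<lambda>x. eps1 x - eps2 x)"
  have Kmu: "\<exists>K. \<forall>x. cnorm ip0 (muinv1 x - muinv2 x) \<le> K * cnorm ip0 x"
  proof -
    obtain K1 where K1: "\<forall>x. cnorm ip0 (muinv1 x) \<le> K1 * cnorm ip0 x" using mu1_bd by blast
    obtain K2 where K2: "\<forall>x. cnorm ip0 (muinv2 x) \<le> K2 * cnorm ip0 x" using mu2_bd by blast
    have "cnorm ip0 (muinv1 x - muinv2 x) \<le> (K1 + K2) * cnorm ip0 x" for x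
      using cnorm_diff_le[OF ci0, of "muinv1 x" "muinv2 x"] K1[rule_format, of x] K2[rule_format, of x]
      by (simp add: distrib_right)
    then show ?thesis by blast
  qed
  have Keps: "\<exists>K. \<forall>x. cnorm ip0 (eps1 x - eps2 x) \<le> K * cnorm ip0 x"
  proof -
    obtain K1 where K1: "\<forall>x. cnorm ip0 (eps1 x) \<le> K1 * cnorm ip0 x" using eps1_bd by blast
    obtain K2 where K2: "\<forall>x. cnorm ip0 (eps2 x) \<le> K2 * cnorm ip0 x" using eps2_bd by blast
    have "cnorm ip0 (eps1 x - eps2 x) \<le> (K1 + K2) * cnorm ip0 x" for x
      using cnorm_diff_le[OF ci0, of "eps1 x" "eps2 x"] K1[rule_format, of x] K2[rule_format, of x]
      by (simp add: distrib_right)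
    then show ?thesis by blast
  qed
  have dm_bd: "\<And>x. cnorm ip0 (muinv1 x - muinv2 x) \<le> dm * cnorm ip0 x" and dm_nn: "0 \<le> dm"
    using opnorm_bound[of "cnorm ip0" "\<lambda>x. muinv1 x - muinv2 x", OF n0_nonneg Kmu] unfolding dm_def
    by auto
  have de_bd: "\<And>x. cnorm ip0 (eps1 x - eps2 x) \<le> de * cnorm ip0 x" and de_nn: "0 \<le> de"
    using opnorm_bound[of "cnorm ip0" "\<lambda>x. eps1 x - eps2 x", OF n0_nonneg Keps] unfolding de_def
    by auto
  define a1 where "a1 = aform ip0 D b muinv1 eps1"
  define a2 where "a2 = aform ip0 D b muinv2 eps2"
  define \<delta> where "\<delta> = dm + de"
  have diff: "cmod (a1 u v - a2 u v) \<le> \<delta> * (cnorm ipH u * cnorm ipH v)" if uv: "u \<in> H" "v \<in> H" for u v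
  proof -
    define X where "X = muinv1 (D u) - muinv2 (D u)"
    define Y where "Y = eps1 u - eps2 u"
    have e: "a1 u v - a2 u v = ip0 X (D v) - ip0 Y v"
      unfolding a1_def a2_def aform_def X_def Y_def ip_diff1[OF ci0] by (simp add: algebra_simps)
    have t1: "cmod (ip0 X (D v)) \<le> dm * (cnorm ipH u * cnorm ipH v)"
    proof -
      have "cmod (ip0 X (D v)) \<le> cnorm ip0 X * cnorm ip0 (D v)" by (rule cauchy_schwarz[OF ci0])
      also have "\<dots> \<le> (dm * cnorm ipH u) * cnorm ipH v"
      proof (rule mult_mono)
        show "cnorm ip0 X \<le> dm * cnorm ipH u"
          using dm_bd[of "D u"] D_bd uv dm_nn unfolding X_def
          by (meson mult_left_mono order_trans)
        show "cnorm ip0 (D v) \<le> cnorm ipH v" using D_bd uv by blast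
      qed (use dm_nn nH_nonneg[OF uv(1)] nH_nonneg[OF uv(2)] n0_nonneg in auto)
      finally show ?thesis by (simp add: mult.assoc)
    qed
    have t2: "cmod (ip0 Y v) \<le> de * (cnorm ipH u * cnorm ipH v)"
    proof -
      have "cmod (ip0 Y v) \<le> cnorm ip0 Y * cnorm ip0 v" by (rule cauchy_schwarz[OF ci0])
      also have "\<dots> \<le> (de * cnorm ipH u) * cnorm ipH v"
      proof (rule mult_mono)
        show "cnorm ip0 Y \<le> de * cnorm ipH u"
          using de_bd[of u] norm_le uv de_nn unfolding Y_def
          by (meson mult_left_mono order_trans)
        show "cnorm ip0 v \<le> cnorm ipH v" using norm_le uv by blast
      qed (use de_nn nH_nonneg[OF uv(1)] nH_nonneg[OF uv(2)] n0_nonneg in auto)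
      finally show ?thesis by (simp add: mult.assoc)
    qed
    have "cmod (a1 u v - a2 u v) \<le> cmod (ip0 X (D v)) + cmod (ip0 Y v)"
      unfolding e by (rule norm_triangle_ineq4)
    then show ?thesis using t1 t2 unfolding \<delta>_def by (simp add: distrib_right)
  qed
  have \<delta>_le: "\<delta> \<le> 1 / (2 * Cdis)"
    using small Cdis_pos unfolding \<delta>_def dm_def de_def by (simp add: field_simps)
  have ratio: "cmod (a1 u v) / (cnorm ipH u * cnorm ipH v) \<le> cmod (a2 u v) / (cnorm ipH u * cnorm ipH v) + \<delta>"
    if u: "u \<in> HN - {0}" and v: "v \<in> HN - {0}" for u v
  proof -
    have uH: "u \<in> H" "u \<noteq> 0" using u HN_H by auto
    have vH: "v \<in> H" "v \<noteq> 0" using v HN_H by auto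
    have pos: "0 < cnorm ipH u * cnorm ipH v" using nH_pos[OF uH] nH_pos[OF vH] by simp
    have "cmod (a1 u v) \<le> cmod (a2 u v) + cmod (a1 u v - a2 u v)"
      using norm_triangle_ineq[of "a2 u v" "a1 u v - a2 u v"] by simp
    also have "\<dots> \<le> cmod (a2 u v) + \<delta> * (cnorm ipH u * cnorm ipH v)"
      using diff[OF uH(1) vH(1)] by simp
    finally have "cmod (a1 u v) / (cnorm ipH u * cnorm ipH v)
        \<le> (cmod (a2 u v) + \<delta> * (cnorm ipH u * cnorm ipH v)) / (cnorm ipH u * cnorm ipH v)"
      using pos by (simp add: divide_right_mono)
    also have "\<dots> = cmod (a2 u v) / (cnorm ipH u * cnorm ipH v) + \<delta>"
      using nH_pos[OF uH] nH_pos[OF vH] by (simp add: add_divide_distrib)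
    finally show ?thesis .
  qed
  have P1u: "ereal (1 / (2 * Cdis)) \<le> (SUP v\<in>HN - {0}. ereal (cmod (a2 u v) / (cnorm ipH u * cnorm ipH v)))"
    if u: "u \<in> HN - {0}" for u
  proof -
    define S1 where "S1 = (SUP v\<in>HN - {0}. ereal (cmod (a1 u v) / (cnorm ipH u * cnorm ipH v)))"
    define S2 where "S2 = (SUP v\<in>HN - {0}. ereal (cmod (a2 u v) / (cnorm ipH u * cnorm ipH v)))"
    have h1: "ereal (1 / Cdis) \<le> S1"
      using order_trans[OF infsup1 INF_lower[OF u]] unfolding S1_def a1_def .
    have h2: "S1 \<le> S2 + ereal \<delta>"
      unfolding S1_def
    proof (rule SUP_least)
      fix v assume v: "v \<in> HN - {0}"
      have "ereal (cmod (a1 u v) / (cnorm ipH u * cnorm ipH v))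
          \<le> ereal (cmod (a2 u v) / (cnorm ipH u * cnorm ipH v)) + ereal \<delta>"
        using ratio[OF u v] by simp
      also have "\<dots> \<le> S2 + ereal \<delta>"
        unfolding S2_def by (rule add_right_mono) (rule SUP_upper[OF v])
      finally show "ereal (cmod (a1 u v) / (cnorm ipH u * cnorm ipH v)) \<le> S2 + ereal \<delta>" .
    qed
    have half: "1 / Cdis = 1 / (2 * Cdis) + 1 / (2 * Cdis)" using Cdis_pos by (simp add: field_simps)
    have "ereal (1 / (2 * Cdis)) \<le> S2"
    proof (cases S2)
      case (real r)
      from h1 h2 have "ereal (1 / Cdis) \<le> S2 + ereal \<delta>" by (rule order_trans)
      with real have "ereal (1 / Cdis) \<le> ereal (r + \<delta>)" by simp
      then have "1 / Cdis \<le> r + \<delta>" by simp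
      then have "1 / (2 * Cdis) \<le> r" using half \<delta>_le by linarith
      then show ?thesis using real by simp
    next
      case PInf then show ?thesis by simp
    next
      case MInf then show ?thesis using h1 h2 by simp
    qed
    then show ?thesis unfolding S2_def .
  qed
  have P1: "ereal (1 / (2 * Cdis)) \<le> (INF u\<in>HN - {0}. SUP v\<in>HN - {0}.
        ereal (cmod (a2 u v) / (cnorm ipH u * cnorm ipH v)))"
    by (rule INF_greatest) (rule P1u)
  have nz: "u = 0" if u: "u \<in> HN" and all: "\<forall>v\<in>HN. a2 u v = 0" for u
  proof (rule ccontr)
    assume "u \<noteq> 0"
    then have u': "u \<in> HN - {0}" using u by simp
    have "(SUP v\<in>HN - {0}. ereal (cmod (a2 u v) / (cnorm ipH u * cnorm ipH v))) \<le> 0"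
      by (rule SUP_least) (use all in simp)
    with P1u[OF u'] have "ereal (1 / (2 * Cdis)) \<le> 0" by (rule order_trans)
    then have "1 / (2 * Cdis) \<le> 0" by (simp add: zero_ereal_def)
    then show False using Cdis_pos by (simp add: field_simps)
  qed
  have D_add: "\<And>x y. x \<in> H \<Longrightarrow> y \<in> H \<Longrightarrow> D (x + y) = D x + D y"
    and D_scale: "\<And>c x. x \<in> H \<Longrightarrow> D (sc c x) = sc c (D x)"
    using D_lin unfolding clinear_on_def by blast+
  have mu2_add: "\<And>x y. muinv2 (x + y) = muinv2 x + muinv2 y"
    and mu2_scale: "\<And>c x. muinv2 (sc c x) = sc c (muinv2 x)"
    using mu2_lin unfolding Vector_Spaces.linear_iff by blast+
  have eps2_add: "\<And>x y. eps2 (x + y) = eps2 x + eps2 y"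
    and eps2_scale: "\<And>c x. eps2 (sc c x) = sc c (eps2 x)"
    using eps2_lin unfolding Vector_Spaces.linear_iff by blast+
  have b_add1: "\<And>x y z. x \<in> H \<Longrightarrow> y \<in> H \<Longrightarrow> z \<in> H \<Longrightarrow> b (x + y) z = b x z + b y z"
    and b_scale1: "\<And>c x y. x \<in> H \<Longrightarrow> y \<in> H \<Longrightarrow> b (sc c x) y = c * b x y"
    and b_add2: "\<And>x y z. x \<in> H \<Longrightarrow> y \<in> H \<Longrightarrow> z \<in> H \<Longrightarrow> b x (y + z) = b x y + b x z"
    and b_scale2: "\<And>c x y. x \<in> H \<Longrightarrow> y \<in> H \<Longrightarrow> b x (sc c y) = cnj c * b x y"
    using b_sesq unfolding sesq_on_def by blast+
  have a2_add1: "a2 (x + y) z = a2 x z + a2 y z" if "x \<in> H" "y \<in> H" "z \<in> H" for x y z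
    unfolding a2_def aform_def using that
    by (simp add: D_add mu2_add eps2_add b_add1 ip_add1[OF ci0] algebra_simps)
  have a2_scale1: "a2 (sc c x) y = c * a2 x y" if "x \<in> H" "y \<in> H" for c x y
    unfolding a2_def aform_def using that
    by (simp add: D_scale mu2_scale eps2_scale b_scale1 ip_scale1[OF ci0] algebra_simps)
  have a2_add2: "a2 x (y + z) = a2 x y + a2 x z" if "x \<in> H" "y \<in> H" "z \<in> H" for x y z
    unfolding a2_def aform_def using that
    by (simp add: D_add b_add2 ip_add2[OF ci0] algebra_simps)
  have a2_scale2: "a2 x (sc c y) = cnj c * a2 x y" if "x \<in> H" "y \<in> H" for c x y
    unfolding a2_def aform_def using that
    by (simp add: D_scale b_scale2 ip_scale2[OF ci0] algebra_simps)
  have H0: "0 \<in> H" using Hsub by (rule V.subspace_0)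
  have a2_zero1: "a2 0 y = 0" if "y \<in> H" for y
    using a2_add1[OF H0 H0 that] by simp
  have a2_zero2: "a2 x 0 = 0" if "x \<in> H" for x
    using a2_add2[OF that H0 H0] by simp
  have a2_sum2: "a2 u (\<Sum>j\<in>J. sc (y j) j) = (\<Sum>j\<in>J. cnj (y j) * a2 u j)"
    if "finite J" "J \<subseteq> H" "u \<in> H" for J y u
    using that
  proof (induction J rule: finite_induct)
    case empty then show ?case using a2_zero2 by simp
  next
    case (insert x F)
    have xH: "x \<in> H" using insert by simp
    have sH: "(\<Sum>j\<in>F. sc (y j) j) \<in> H"
      using insert by (intro V.subspace_sum[OF Hsub] V.subspace_scale[OF Hsub]) auto
    have "a2 u (\<Sum>j\<in>insert x F. sc (y j) j) = a2 u (sc (y x) x + (\<Sum>j\<in>F. sc (y j) j))"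
      using insert by simp
    also have "\<dots> = a2 u (sc (y x) x) + a2 u (\<Sum>j\<in>F. sc (y j) j)"
      by (rule a2_add2) (use insert xH sH V.subspace_scale[OF Hsub xH] in auto)
    also have "\<dots> = cnj (y x) * a2 u x + (\<Sum>j\<in>F. cnj (y j) * a2 u j)"
      using insert a2_scale2[OF insert(5) xH] by simp
    finally show ?case using insert by simp
  qed
  obtain B where BHN: "B \<subseteq> HN" and indep: "V.independent B" and HNB: "HN \<subseteq> V.span B"
    by (rule V.maximal_independent_subset)
  obtain B0 where B0: "finite B0" "V.span B0 = HN" using HN_fin by blast
  have finB: "finite B" and cardB: "card B \<le> card B0"
    using V.independent_span_bound[OF B0(1) indep] BHN B0(2) by auto
  have spanB: "V.span B = HN" by (rule V.span_subspace[OF BHN HNB HN_sub])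
  have BH: "B \<subseteq> H" using BHN HN_H by blast
  have HNH: "\<And>x. x \<in> HN \<Longrightarrow> x \<in> H" using HN_H by blast
  have coef: "\<forall>j\<in>B. f j = 0" if "(\<Sum>j\<in>B. sc (f j) j) = 0" for f
    using indep V.dependent_finite[OF finB] that by blast
  have spanB_eq: "HN = range (\<lambda>f. \<Sum>j\<in>B. sc (f j) j)"
    using V.span_finite[OF finB] spanB by simp
  define g where "g u = (\<Sum>j\<in>B. sc (a2 u j) j)" for u
  interpret VP: vector_space_pair sc sc by (rule vector_space_pair.intro[OF vs vs])
  define G where "G = VP.construct B g"
  have linG: "Vector_Spaces.linear sc sc G" unfolding G_def by (rule VP.linear_construct[OF indep])
  interpret LG: Vector_Spaces.linear sc sc G by (rule linG)
  have gHN: "g u \<in> HN" for u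
    unfolding g_def using BHN by (intro V.subspace_sum[OF HN_sub] V.subspace_scale[OF HN_sub]) auto
  have Gg: "u \<in> HN \<and> G u = g u" if u: "u \<in> HN" for u
  proof -
    have "u \<in> V.span B" using u spanB by simp
    then show ?thesis
    proof (induction rule: V.span_induct)
      case base
      show ?case
      proof (rule V.subspaceI)
        have "g 0 = 0" unfolding g_def using BH a2_zero1 by (simp add: subset_iff)
        then show "0 \<in> {u. u \<in> HN \<and> G u = g u}" using V.subspace_0[OF HN_sub] by simp
      next
        fix x y assume x: "x \<in> {u. u \<in> HN \<and> G u = g u}" and y: "y \<in> {u. u \<in> HN \<and> G u = g u}"
        have "g (x + y) = (\<Sum>j\<in>B. sc (a2 x j) j + sc (a2 y j) j)"
          unfolding g_def using x y BH HNH
          by (intro sum.cong) (auto simp: a2_add1 V.scale_left_distrib subset_iff)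
        also have "\<dots> = g x + g y" unfolding g_def by (simp add: sum.distrib)
        finally show "x + y \<in> {u. u \<in> HN \<and> G u = g u}"
          using x y V.subspace_add[OF HN_sub] LG.add by auto
      next
        fix c x assume x: "x \<in> {u. u \<in> HN \<and> G u = g u}"
        have "g (sc c x) = (\<Sum>j\<in>B. sc c (sc (a2 x j) j))"
          unfolding g_def using x BH HNH
          by (intro sum.cong) (auto simp: a2_scale1 subset_iff)
        also have "\<dots> = sc c (g x)" unfolding g_def by (simp add: V.scale_sum_right)
        finally show "sc c x \<in> {u. u \<in> HN \<and> G u = g u}"
          using x V.subspace_scale[OF HN_sub] LG.scale by auto
      qed
    next
      case (step x)
      then show ?case using BHN VP.construct_basis[OF indep] unfolding G_def by auto
    qed
  qed
  have ker: "u = 0" if u: "u \<in> HN" and Gu: "G u = 0" for u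
  proof -
    have "g u = 0" using Gg[OF u] Gu by simp
    then have z: "\<forall>j\<in>B. a2 u j = 0" using coef unfolding g_def by blast
    have "\<forall>v\<in>HN. a2 u v = 0"
    proof
      fix v assume "v \<in> HN"
      then obtain f where v: "v = (\<Sum>j\<in>B. sc (f j) j)" using spanB_eq by blast
      show "a2 u v = 0" unfolding v using a2_sum2[OF finB BH HNH[OF u]] z by simp
    qed
    then show ?thesis using nz u by blast
  qed
  have inj: "inj_on G (V.span B)"
    unfolding spanB using LG.inj_on_iff_eq_0[OF HN_sub] ker by blast
  have indepC: "V.independent (G ` B)"
    by (rule LG.independent_injective_image[OF indep inj])
  have injB: "inj_on G B" using inj V.span_superset by (rule inj_on_subset)
  have cardC: "card (G ` B) = card B" by (rule card_image[OF injB])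
  have CHN: "G ` B \<subseteq> HN" using Gg BHN gHN by auto
  have HNC: "HN \<subseteq> V.span (G ` B)"
  proof
    fix x assume x: "x \<in> HN"
    show "x \<in> V.span (G ` B)"
    proof (rule ccontr)
      assume nx: "x \<notin> V.span (G ` B)"
      have ind2: "V.independent (insert x (G ` B))" by (rule V.independent_insertI[OF nx indepC])
      have sub2: "insert x (G ` B) \<subseteq> V.span B" using x CHN spanB by auto
      have "card (insert x (G ` B)) \<le> card B"
        using V.independent_span_bound[OF finB ind2 sub2] by simp
      moreover have "x \<notin> G ` B" using nx V.span_superset by blast
      ultimately show False using cardC finB by simp
    qed
  qed
  have P2: "\<forall>v\<in>HN - {0}. (SUP u\<in>HN - {0}. ereal (cmod (a2 u v))) > 0"
  proof
    fix v assume v: "v \<in> HN - {0}"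
    have "v \<in> G ` V.span B" using v HNC LG.span_image by auto
    then obtain u where uB: "u \<in> V.span B" and vu: "v = G u" by blast
    have u: "u \<in> HN" using uB spanB by simp
    have vg: "v = g u" using vu Gg[OF u] by simp
    obtain y where vy: "v = (\<Sum>j\<in>B. sc (y j) j)" using v spanB_eq by blast
    have "(\<Sum>j\<in>B. sc (a2 u j - y j) j) = g u - v"
      unfolding g_def vy by (simp add: V.scale_left_diff_distrib sum_subtractf)
    then have "\<forall>j\<in>B. a2 u j - y j = 0" using coef[of "\<lambda>j. a2 u j - y j"] vg by simp
    then have ay: "\<forall>j\<in>B. a2 u j = y j" by simp
    have cnsq: "cnj z * z = complex_of_real ((cmod z)\<^sup>2)" for z
      using complex_norm_square[of z] by (simp add: mult.commute)
    have "a2 u v = (\<Sum>j\<in>B. cnj (y j) * a2 u j)" unfolding vy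
      by (rule a2_sum2[OF finB BH HNH[OF u]])
    also have "\<dots> = (\<Sum>j\<in>B. complex_of_real ((cmod (y j))\<^sup>2))"
      using ay cnsq by (intro sum.cong) auto
    also have "\<dots> = complex_of_real (\<Sum>j\<in>B. (cmod (y j))\<^sup>2)" by simp
    finally have av: "a2 u v = complex_of_real (\<Sum>j\<in>B. (cmod (y j))\<^sup>2)" .
    obtain j0 where j0: "j0 \<in> B" "y j0 \<noteq> 0"
    proof (rule ccontr)
      assume "\<not> thesis"
      then have "\<forall>j\<in>B. y j = 0" using that by blast
      then have "v = 0" unfolding vy by simp
      then show False using v by simp
    qed
    have "0 < (\<Sum>j\<in>B. (cmod (y j))\<^sup>2)"
      by (rule sum_pos2[OF finB j0(1)]) (use j0 in auto)
    then have "0 < cmod (a2 u v)" unfolding av norm_of_real by simp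
    moreover have "u \<noteq> 0"
    proof
      assume "u = 0"
      then have "a2 u v = 0" using a2_zero1 HNH v by simp
      then show False using \<open>0 < cmod (a2 u v)\<close> by simp
    qed
    ultimately have "ereal 0 < ereal (cmod (a2 u v))" by simp
    also have "\<dots> \<le> (SUP u\<in>HN - {0}. ereal (cmod (a2 u v)))"
      by (rule SUP_upper) (use u \<open>u \<noteq> 0\<close> in simp)
    finally show "(SUP u\<in>HN - {0}. ereal (cmod (a2 u v))) > 0" by (simp add: zero_ereal_def)
  qed
  show ?thesis using conjI[OF P1 P2] unfolding a2_def .
qed


end
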